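(* Let $0\le\alpha<1$ and let $G$ be a graph on $n$ vertices with minimum degree $\delta\ge 1$. Let $\mathbf{x}=(x_1,\dots,x_n)$ be a non-negative unit eigenvector of $A_\alpha(G)$ corresponding to $\lambda_\alpha(G)$ and $x=\min\{x_1,\dots,x_n\}$. Then $$x^2 \leq \frac{\delta (1-\alpha)^2}{(\lambda_{\alpha}(G)-\alpha \delta)^2+\delta(n-\delta) (1-\alpha)^2}.$$
   Context: $A_\alpha(G)=\alpha D(G)+(1-\alpha)A(G)$, where $A(G)$ is the adjacency matrix and $D(G)$ the diagonal degree matrix; $\lambda_\alpha(G)$ is its largest eigenvalue. *)

theory Defs
  imports Complex_Main
begin

definition simple_graph :: "nat \<Rightarrow> (nat \<Rightarrow> nat \<Rightarrow> bool) \<Rightarrow> bool" where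
  "simple_graph n E \<longleftrightarrow> (\<forall>i<n. \<forall>j<n. E i j \<longleftrightarrow> E j i) \<and> (\<forall>i<n. \<not> E i i)"

definition degree :: "nat \<Rightarrow> (nat \<Rightarrow> nat \<Rightarrow> bool) \<Rightarrow> nat \<Rightarrow> nat" where
  "degree n E i = card {j. j < n \<and> E i j}"

definition min_degree :: "nat \<Rightarrow> (nat \<Rightarrow> nat \<Rightarrow> bool) \<Rightarrow> nat" where
  "min_degree n E = Min (degree n E ` {..<n})"

definition adj_mat :: "(nat \<Rightarrow> nat \<Rightarrow> bool) \<Rightarrow> nat \<Rightarrow> nat \<Rightarrow> real" where
  "adj_mat E i j = (if E i j then 1 else 0)"

definition deg_mat :: "nat \<Rightarrow> (nat \<Rightarrow> nat \<Rightarrow> bool) \<Rightarrow> nat \<Rightarrow> nat \<Rightarrow> real" where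
  "deg_mat n E i j = (if i = j then real (degree n E i) else 0)"

definition A_alpha :: "real \<Rightarrow> nat \<Rightarrow> (nat \<Rightarrow> nat \<Rightarrow> bool) \<Rightarrow> nat \<Rightarrow> nat \<Rightarrow> real" where
  "A_alpha \<alpha> n E i j = \<alpha> * deg_mat n E i j + (1 - \<alpha>) * adj_mat E i j"

definition is_eigenpair :: "nat \<Rightarrow> (nat \<Rightarrow> nat \<Rightarrow> real) \<Rightarrow> real \<Rightarrow> (nat \<Rightarrow> real) \<Rightarrow> bool" where
  "is_eigenpair n M \<mu> v \<longleftrightarrow> (\<exists>i<n. v i \<noteq> 0) \<and> (\<forall>i<n. (\<Sum>j<n. M i j * v j) = \<mu> * v i)"

definition is_eigenvalue :: "nat \<Rightarrow> (nat \<Rightarrow> nat \<Rightarrow> real) \<Rightarrow> real \<Rightarrow> bool" where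
  "is_eigenvalue n M \<mu> \<longleftrightarrow> (\<exists>v. is_eigenpair n M \<mu> v)"

text \<open>Largest (real) eigenvalue; A_alpha is real symmetric, so all eigenvalues are real.\<close>
definition largest_eigenvalue :: "nat \<Rightarrow> (nat \<Rightarrow> nat \<Rightarrow> real) \<Rightarrow> real" where
  "largest_eigenvalue n M = Max {\<mu>. is_eigenvalue n M \<mu>}"

definition lambda_alpha :: "real \<Rightarrow> nat \<Rightarrow> (nat \<Rightarrow> nat \<Rightarrow> bool) \<Rightarrow> real" where
  "lambda_alpha \<alpha> n E = largest_eigenvalue n (A_alpha \<alpha> n E)"

end

theory Submission
  imports Defs
begin

lemma cs_sum:
  fixes f :: "nat \<Rightarrow> real"
  assumes "finite N"
  shows "(sum f N)\<^sup>2 \<le> real (card N) * (\<Sum>j\<in>N. (f j)\<^sup>2)"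
proof -
  have "(sum f N)\<^sup>2 = (\<Sum>i\<in>N. \<Sum>j\<in>N. f i * f j)"
    by (simp add: power2_eq_square sum_product)
  also have "\<dots> \<le> (\<Sum>i\<in>N. \<Sum>j\<in>N. ((f i)\<^sup>2 + (f j)\<^sup>2) / 2)"
  proof (intro sum_mono)
    fix i j
    have "0 \<le> (f i - f j)\<^sup>2" by simp
    then show "f i * f j \<le> ((f i)\<^sup>2 + (f j)\<^sup>2) / 2"
      by (simp add: power2_eq_square algebra_simps)
  qed
  also have "\<dots> = (\<Sum>i\<in>N. \<Sum>j\<in>N. (f i)\<^sup>2 / 2) + (\<Sum>i\<in>N. \<Sum>j\<in>N. (f j)\<^sup>2 / 2)"
    by (simp add: sum.distrib add_divide_distrib)
  also have "\<dots> = real (card N) * (\<Sum>j\<in>N. (f j)\<^sup>2)"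
    by (simp add: sum_divide_distrib[symmetric] sum_distrib_left[symmetric] mult.commute)
  finally show ?thesis .
qed

theorem lemma5p3:
  fixes \<alpha> :: real and n :: nat and E :: "nat \<Rightarrow> nat \<Rightarrow> bool" and x :: "nat \<Rightarrow> real"
  assumes "0 \<le> \<alpha>" and "\<alpha> < 1"
    and "simple_graph n E"
    and "0 < n"
    and "min_degree n E \<ge> 1"
    and "\<forall>i<n. x i \<ge> 0"
    and "(\<Sum>i<n. (x i)\<^sup>2) = 1"
    and "is_eigenpair n (A_alpha \<alpha> n E) (lambda_alpha \<alpha> n E) x"
  shows "(Min (x ` {..<n}))\<^sup>2 \<le>
     real (min_degree n E) * (1 - \<alpha>)\<^sup>2 /
     ((lambda_alpha \<alpha> n E - \<alpha> * real (min_degree n E))\<^sup>2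
      + real (min_degree n E) * real (n - min_degree n E) * (1 - \<alpha>)\<^sup>2)"
proof -
  define d where "d = min_degree n E"
  define lam where "lam = lambda_alpha \<alpha> n E"
  define m where "m = Min (x ` {..<n})"
  have ne: "{..<n} \<noteq> {}" using assms(4) by auto
  have "d \<in> degree n E ` {..<n}"
    unfolding d_def min_degree_def using ne by (intro Min_in) auto
  then obtain u where u: "u < n" "degree n E u = d" by auto
  define N where "N = {j. j < n \<and> E u j}"
  have finN: "finite N" unfolding N_def by auto
  have cardN: "card N = d" using u unfolding N_def degree_def by simp
  have Nsub: "N \<subseteq> {..<n}" unfolding N_def by auto
  have irr: "\<not> E u u" using assms(3) u unfolding simple_graph_def by auto
  have uN: "u \<notin> N" using irr unfolding N_def by auto
  have "N \<subseteq> {..<n} - {u}" using Nsub uN by auto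
  then have "card N \<le> card ({..<n} - {u})" by (intro card_mono) auto
  then have dlt: "d < n" using cardN u by auto
  have d1: "d \<ge> 1" using assms(5) d_def by simp
  have m0: "m \<ge> 0" unfolding m_def using ne assms(6) by (subst Min_ge_iff) auto
  have mle: "\<And>j. j < n \<Longrightarrow> m \<le> x j" unfolding m_def by auto
  have eig: "(\<Sum>j<n. A_alpha \<alpha> n E u j * x j) = lam * x u"
    using assms(8) u unfolding is_eigenpair_def lam_def by auto
  have "(\<Sum>j<n. A_alpha \<alpha> n E u j * x j)
      = (\<Sum>j<n. \<alpha> * (if u = j then real d else 0) * x j) + (\<Sum>j<n. (1-\<alpha>) * (if E u j then 1 else 0) * x j)"
    unfolding sum.distrib[symmetric] A_alpha_def deg_mat_def adj_mat_def using u
    by (intro sum.cong) (auto simp: algebra_simps)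
  also have "(\<Sum>j<n. \<alpha> * (if u = j then real d else 0) * x j) = \<alpha> * real d * x u"
  proof -
    have "(\<Sum>j<n. \<alpha> * (if u = j then real d else 0) * x j) = (\<Sum>j<n. if u = j then \<alpha> * real d * x j else 0)"
      by (intro sum.cong) auto
    also have "\<dots> = \<alpha> * real d * x u" using u by (simp add: sum.delta)
    finally show ?thesis .
  qed
  also have "(\<Sum>j<n. (1-\<alpha>) * (if E u j then 1 else 0) * x j) = (1-\<alpha>) * sum x N"
  proof -
    have "(\<Sum>j<n. (1-\<alpha>) * (if E u j then 1 else 0) * x j) = (\<Sum>j<n. if E u j then (1-\<alpha>) * x j else 0)"
      by (intro sum.cong) auto
    also have "\<dots> = (\<Sum>j\<in>{j\<in>{..<n}. E u j}. (1-\<alpha>) * x j)"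
      by (simp add: sum.inter_filter[symmetric] lessThan_def)
    also have "\<dots> = (1-\<alpha>) * sum x N" unfolding N_def by (simp add: sum_distrib_left)
    finally show ?thesis .
  qed
  finally have key: "(lam - \<alpha> * d) * x u = (1-\<alpha>) * sum x N" using eig by (simp add: algebra_simps)
  define L where "L = lam - \<alpha> * d"
  define c where "c = (1-\<alpha>)\<^sup>2"
  have c0: "c > 0" using assms(2) unfolding c_def by simp
  have "L\<^sup>2 * (x u)\<^sup>2 = c * (sum x N)\<^sup>2" using key unfolding L_def c_def
    by (metis power_mult_distrib)
  also have "\<dots> \<le> c * (d * (\<Sum>j\<in>N. (x j)\<^sup>2))"
    using cs_sum[OF finN, of x] cardN c0 by (intro mult_left_mono) auto
  finally have s1: "L\<^sup>2 * (x u)\<^sup>2 \<le> c * (d * (\<Sum>j\<in>N. (x j)\<^sup>2))" .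
  have split: "(\<Sum>j<n. (x j)\<^sup>2) = (\<Sum>j\<in>N. (x j)\<^sup>2) + (\<Sum>j\<in>{..<n} - N. (x j)\<^sup>2)"
    using Nsub finN by (metis add.commute finite_lessThan sum.subset_diff)
  have cardR: "card ({..<n} - N) = n - d" using Nsub finN cardN by (simp add: card_Diff_subset)
  have "(\<Sum>j\<in>{..<n} - N. m\<^sup>2) \<le> (\<Sum>j\<in>{..<n} - N. (x j)\<^sup>2)"
    using mle m0 by (intro sum_mono power_mono) auto
  then have "real (n - d) * m\<^sup>2 \<le> (\<Sum>j\<in>{..<n} - N. (x j)\<^sup>2)" using cardR by simp
  then have s2: "(\<Sum>j\<in>N. (x j)\<^sup>2) \<le> 1 - real (n - d) * m\<^sup>2" using split assms(7) by linarith
  have s3: "L\<^sup>2 * m\<^sup>2 \<le> L\<^sup>2 * (x u)\<^sup>2"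
    using mle[OF u(1)] m0 by (intro mult_left_mono power_mono) auto
  have "c * (d * (\<Sum>j\<in>N. (x j)\<^sup>2)) \<le> c * (d * (1 - real (n - d) * m\<^sup>2))"
    using s2 c0 by (intro mult_left_mono) auto
  with s1 s3 have main: "m\<^sup>2 * (L\<^sup>2 + d * real (n - d) * c) \<le> d * c"
    by (simp add: algebra_simps)
  have Dpos: "L\<^sup>2 + d * real (n - d) * c > 0"
    using dlt d1 c0 by (intro add_nonneg_pos) auto
  have "m\<^sup>2 \<le> d * c / (L\<^sup>2 + d * real (n - d) * c)"
    using main Dpos by (simp add: le_divide_eq)
  then show ?thesis unfolding m_def L_def c_def d_def lam_def .
qed

end
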